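(* Let $G$ be a cactus graph with $n>2$ vertices and $b$ bridges, and let $d=\deg(G)$ be its degree sequence. Then $b\ge \beta$, where $\beta=\max\{\mu_1,\tfrac12(\mu_1+\mu_{odd})\}$.
   Context: A cactus graph is a connected simple graph in which every edge belongs to at most one cycle. A bridge is an edge whose removal disconnects the graph. For a degree sequence $d$, $\mu_1$ denotes the number of entries equal to $1$, and $\mu_{odd}$ denotes the number of entries that are odd integers greater than $1$. *)

theory Defs
  imports Complex_Main
begin

definition simple_graph :: "'a set \<Rightarrow> 'a set set \<Rightarrow> bool" where
  "simple_graph V E \<longleftrightarrow> finite V \<and> (\<forall>e\<in>E. e \<subseteq> V \<and> card e = 2)"

fun is_walk :: "'a set set \<Rightarrow> 'a list \<Rightarrow> bool" where
  "is_walk E [] = False"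
| "is_walk E [v] = True"
| "is_walk E (u # v # vs) = ({u, v} \<in> E \<and> is_walk E (v # vs))"

definition connected_graph :: "'a set \<Rightarrow> 'a set set \<Rightarrow> bool" where
  "connected_graph V E \<longleftrightarrow>
     (\<forall>u\<in>V. \<forall>v\<in>V. \<exists>p. is_walk E p \<and> hd p = u \<and> last p = v)"

definition cycle_edges :: "'a list \<Rightarrow> 'a set set" where
  "cycle_edges vs = {{vs ! i, vs ! ((i + 1) mod length vs)} | i. i < length vs}"

text \<open>A cycle (as a subgraph, identified with its edge set): at least 3 distinct
vertices, cyclically consecutive ones adjacent.\<close>
definition cycles :: "'a set set \<Rightarrow> 'a set set set" where
  "cycles E = {cycle_edges vs | vs. length vs \<ge> 3 \<and> distinct vs \<and> cycle_edges vs \<subseteq> E}"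

definition cactus :: "'a set \<Rightarrow> 'a set set \<Rightarrow> bool" where
  "cactus V E \<longleftrightarrow> simple_graph V E \<and> connected_graph V E \<and>
     (\<forall>e\<in>E. card {C \<in> cycles E. e \<in> C} \<le> 1)"

definition bridges :: "'a set \<Rightarrow> 'a set set \<Rightarrow> 'a set set" where
  "bridges V E = {e \<in> E. \<not> connected_graph V (E - {e})}"

definition degree :: "'a set set \<Rightarrow> 'a \<Rightarrow> nat" where
  "degree E v = card {e \<in> E. v \<in> e}"

definition mu1 :: "'a set \<Rightarrow> 'a set set \<Rightarrow> nat" where
  "mu1 V E = card {v \<in> V. degree E v = 1}"

definition mu_odd :: "'a set \<Rightarrow> 'a set set \<Rightarrow> nat" where
  "mu_odd V E = card {v \<in> V. odd (degree E v) \<and> degree E v > 1}"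

end

theory Submission imports Defs begin

lemma walk_ne: "is_walk E p \<Longrightarrow> p \<noteq> []"
  by (cases p) auto

lemma walk_stays:
  "is_walk E p \<Longrightarrow> hd p \<in> S \<Longrightarrow> (\<forall>s\<in>S. \<forall>f\<in>E. s \<in> f \<longrightarrow> f \<subseteq> S) \<Longrightarrow> set p \<subseteq> S"
  by (induction E p rule: is_walk.induct) (auto, blast+)

lemma walk_nth: "is_walk E q \<Longrightarrow> Suc i < length q \<Longrightarrow> {q!i, q!Suc i} \<in> E"
proof (induction E q arbitrary: i rule: is_walk.induct)
  case (3 E u v vs)
  then show ?case by (cases i) auto
qed auto

lemma walk_drop: "is_walk E q \<Longrightarrow> n < length q \<Longrightarrow> is_walk E (drop n q)"
proof (induction E q arbitrary: n rule: is_walk.induct)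
  case (3 E u v vs)
  then show ?case by (cases n) auto
qed auto

lemma walk_path: "is_walk E p \<Longrightarrow> \<exists>q. is_walk E q \<and> distinct q \<and> hd q = hd p \<and> last q = last p"
proof (induction E p rule: is_walk.induct)
  case (2 E v)
  then show ?case by (intro exI[of _ "[v]"]) auto
next
  case (3 E u v vs)
  then obtain q where q: "is_walk E q" "distinct q" "hd q = v" "last q = last (v#vs)" by auto
  have qne: "q \<noteq> []" using q(1) walk_ne by blast
  show ?case
  proof (cases "u \<in> set q")
    case True
    define k where "k = length (takeWhile (\<lambda>y. y \<noteq> u) q)"
    have dw: "dropWhile (\<lambda>y. y \<noteq> u) q = drop k q" unfolding k_def by (rule dropWhile_eq_drop)
    have "dropWhile (\<lambda>y. y \<noteq> u) q \<noteq> []" using True by (simp add: dropWhile_eq_Nil_conv)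
    hence kl: "k < length q" using dw by simp
    have "hd (drop k q) = u" using True dw
      by (metis (mono_tags, lifting) hd_dropWhile dropWhile_eq_Nil_conv)
    moreover have "last (drop k q) = last q" using kl by (simp add: last_drop)
    moreover have "is_walk E (drop k q)" using walk_drop[OF q(1) kl] .
    moreover have "distinct (drop k q)" using q(2) by simp
    ultimately show ?thesis using q qne by (intro exI[of _ "drop k q"]) auto
  next
    case False
    obtain r where r: "q = v # r" using qne q(3) by (cases q) auto
    have "is_walk E (u # q)" using 3(2) q(1) r by simp
    then show ?thesis using False q qne by (intro exI[of _ "u#q"]) auto
  qed
qed auto


lemma path_cycle:
  assumes "u \<noteq> w" "{u,w} \<in> E" "is_walk (E - {{u,w}}) q" "distinct q" "hd q = u" "last q = w"
  shows "cycle_edges q \<in> cycles E \<and> {u,w} \<in> cycle_edges q"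
proof -
  define n where "n = length q"
  have qne: "q \<noteq> []" using assms(3) walk_ne by blast
  have h0: "q ! 0 = u" using assms(5) qne by (simp add: hd_conv_nth)
  have hl: "q ! (n - 1) = w" using assms(6) qne unfolding n_def by (simp add: last_conv_nth)
  have n2: "n \<ge> 2"
  proof (rule ccontr)
    assume "\<not> n \<ge> 2"
    then have "n = 1" using qne unfolding n_def by (cases q) (auto simp: Suc_le_eq)
    then show False using h0 hl assms(1) by simp
  qed
  have n3: "n \<ge> 3"
  proof (rule ccontr)
    assume "\<not> n \<ge> 3"
    then have "n = 2" using n2 by simp
    then have "{q!0, q!Suc 0} \<in> E - {{u,w}}" using walk_nth[OF assms(3)] unfolding n_def by simp
    then show False using h0 hl \<open>n = 2\<close> by simp
  qed
  have sub: "cycle_edges q \<subseteq> E"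
  proof
    fix e assume "e \<in> cycle_edges q"
    then obtain i where i: "i < n" "e = {q!i, q!((i+1) mod n)}" unfolding cycle_edges_def n_def by auto
    show "e \<in> E"
    proof (cases "Suc i < n")
      case True
      then have "e = {q!i, q!Suc i}" using i by simp
      then show ?thesis using walk_nth[OF assms(3)] True unfolding n_def by auto
    next
      case False
      then have "i = n - 1" using i by simp
      then have "e = {w, u}" using i h0 hl n3 by simp
      then show ?thesis using assms(2) by (simp add: insert_commute)
    qed
  qed
  have "{q!(n-1), q!((n-1+1) mod n)} \<in> cycle_edges q" unfolding cycle_edges_def n_def
    using n3 n_def by auto
  then have "{u,w} \<in> cycle_edges q" using h0 hl n3 by (simp add: insert_commute)
  moreover have "cycle_edges q \<in> cycles E" unfolding cycles_def using n3 sub assms(4) n_def by auto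
  ultimately show ?thesis by simp
qed

lemma cycle_deg:
  assumes "distinct vs" "length vs \<ge> 3" "v \<in> set vs"
  shows "card {e \<in> cycle_edges vs. v \<in> e} = 2"
proof -
  define n where "n = length vs"
  obtain k where k: "k < n" "v = vs ! k" using assms(3) unfolding n_def by (metis in_set_conv_nth)
  define a where "a = (k+1) mod n"
  define b where "b = (k+n-1) mod n"
  have n3: "n \<ge> 3" using assms(2) n_def by simp
  have an: "a < n" "b < n" using n3 unfolding a_def b_def by auto
  have dist: "k \<noteq> a" "k \<noteq> b" "a \<noteq> b" using k(1) n3 unfolding a_def b_def
    by (cases "Suc k < n"; cases k; auto simp: mod_if)+
  have ab: "(b + 1) mod n = k" unfolding b_def using k(1) n3
    by (metis Nat.add_diff_assoc2 add.commute add_diff_cancel_right' mod_add_self2 mod_less mod_Suc_eq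
        Suc_eq_plus1 le_add2 le_trans one_le_numeral)
  have nth_inj: "\<And>i j. i < n \<Longrightarrow> j < n \<Longrightarrow> vs!i = vs!j \<Longrightarrow> i = j"
    using assms(1) unfolding n_def by (simp add: nth_eq_iff_index_eq)
  have eq: "{e \<in> cycle_edges vs. v \<in> e} = {{vs!k, vs!a}, {vs!b, vs!k}}"
  proof
    show "{e \<in> cycle_edges vs. v \<in> e} \<subseteq> {{vs!k, vs!a}, {vs!b, vs!k}}"
    proof
      fix e assume "e \<in> {e \<in> cycle_edges vs. v \<in> e}"
      then obtain i where i: "i < n" "e = {vs!i, vs!((i+1) mod n)}" "v \<in> e"
        unfolding cycle_edges_def n_def by auto
      have im: "(i+1) mod n < n" using n3 by simp
      show "e \<in> {{vs!k, vs!a}, {vs!b, vs!k}}"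
      proof (cases "vs!i = v")
        case True
        then have "i = k" using nth_inj i(1) k by simp
        then show ?thesis using i a_def by simp
      next
        case False
        then have "vs!((i+1) mod n) = vs!k" using i k by auto
        then have "(i+1) mod n = k" using nth_inj im k(1) by simp
        then have "i = b" unfolding b_def using i(1) k(1)
          by (cases "Suc i < n") (auto simp: mod_if)
        then show ?thesis using i ab by auto
      qed
    qed
  next
    have "{vs!k, vs!a} \<in> cycle_edges vs" unfolding cycle_edges_def a_def n_def using k(1) n_def by auto
    moreover have "{vs!b, vs!k} \<in> cycle_edges vs" unfolding cycle_edges_def
      using an(2) ab n_def by (metis (mono_tags, lifting) mem_Collect_eq)
    ultimately show "{{vs!k, vs!a}, {vs!b, vs!k}} \<subseteq> {e \<in> cycle_edges vs. v \<in> e}" using k by auto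
  qed
  have "vs!a \<noteq> vs!b" using nth_inj an dist by blast
  moreover have "vs!k \<noteq> vs!a" using nth_inj an dist k by blast
  ultimately have "{vs!k, vs!a} \<noteq> {vs!b, vs!k}" by (metis insert_iff doubleton_eq_iff)
  then show ?thesis using eq by simp
qed


lemma finite_E: "simple_graph V E \<Longrightarrow> finite E"
  unfolding simple_graph_def by (meson PowI finite_Pow_iff finite_subset subsetI)

lemma edge_two: "simple_graph V E \<Longrightarrow> e \<in> E \<Longrightarrow> v \<in> e \<Longrightarrow> \<exists>w. w \<noteq> v \<and> w \<in> V \<and> e = {v,w}"
proof -
  assume a: "simple_graph V E" "e \<in> E" "v \<in> e"
  then have "e \<subseteq> V" "card e = 2" unfolding simple_graph_def by auto
  then obtain x y where xy: "e = {x,y}" "x \<noteq> y" by (auto simp: card_2_iff)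
  show ?thesis
  proof (cases "v = x")
    case True
    then show ?thesis using xy \<open>e \<subseteq> V\<close> by (intro exI[of _ y]) auto
  next
    case False
    then have "v = y" using xy a(3) by auto
    then show ?thesis using xy \<open>e \<subseteq> V\<close> by (intro exI[of _ x]) auto
  qed
qed

lemma nonbridge_cycle:
  assumes "cactus V E" "e \<in> E" "e \<notin> bridges V E" "v \<in> e"
  shows "\<exists>C\<in>cycles E. e \<in> C"
proof -
  have sg: "simple_graph V E" using assms(1) unfolding cactus_def by simp
  obtain w where w: "w \<noteq> v" "w \<in> V" "e = {v,w}" using edge_two[OF sg assms(2,4)] by blast
  have vV: "v \<in> V" using sg assms(2,4) unfolding simple_graph_def by auto
  have "connected_graph V (E - {e})" using assms(2,3) unfolding bridges_def by simp
  then obtain p where p: "is_walk (E - {e}) p" "hd p = v" "last p = w"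
    using vV w(2) unfolding connected_graph_def by blast
  obtain q where q: "is_walk (E - {e}) q" "distinct q" "hd q = v" "last q = w"
    using walk_path[OF p(1)] p by auto
  have "cycle_edges q \<in> cycles E \<and> {v,w} \<in> cycle_edges q"
    using path_cycle[of v w E q] w q assms(2) by auto
  then show ?thesis using w by blast
qed

lemma cycle_vertex:
  assumes "C \<in> cycles E" "e \<in> C" "v \<in> e"
  shows "card {e \<in> C. v \<in> e} = 2"
proof -
  obtain vs where vs: "C = cycle_edges vs" "length vs \<ge> 3" "distinct vs"
    using assms(1) unfolding cycles_def by auto
  have "0 < length vs" using vs(2) by linarith
  then have "v \<in> set vs" using assms(2,3) vs(1) unfolding cycle_edges_def
    using vs(2) by (auto intro!: nth_mem)
  then show ?thesis using cycle_deg vs by simp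
qed

lemma odd_has_bridge:
  assumes "cactus V E" "v \<in> V" "odd (degree E v)"
  shows "\<exists>e\<in>bridges V E. v \<in> e"
proof (rule ccontr)
  assume nb: "\<not> (\<exists>e\<in>bridges V E. v \<in> e)"
  have sg: "simple_graph V E" using assms(1) unfolding cactus_def by simp
  have fE: "finite E" using finite_E[OF sg] .
  have fC: "finite (cycles E)" 
  proof -
    have "cycles E \<subseteq> Pow E" unfolding cycles_def by auto
    then show ?thesis using fE by (meson finite_Pow_iff finite_subset)
  qed
  have uniq: "\<And>e C1 C2. e \<in> E \<Longrightarrow> C1 \<in> cycles E \<Longrightarrow> C2 \<in> cycles E \<Longrightarrow> e \<in> C1 \<Longrightarrow> e \<in> C2 \<Longrightarrow> C1 = C2"
  proof -
    fix e C1 C2 assume h: "e \<in> E" "C1 \<in> cycles E" "C2 \<in> cycles E" "e \<in> C1" "e \<in> C2"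
    have "card {C \<in> cycles E. e \<in> C} \<le> Suc 0" using assms(1) h(1) unfolding cactus_def by simp
    moreover have "finite {C \<in> cycles E. e \<in> C}" using fC by simp
    ultimately show "C1 = C2" using h by (auto simp: card_le_Suc0_iff_eq)
  qed
  define Cs where "Cs = {C \<in> cycles E. \<exists>e\<in>C. v \<in> e}"
  have csub: "\<And>C. C \<in> cycles E \<Longrightarrow> C \<subseteq> E" unfolding cycles_def by auto
  have Ev: "{e \<in> E. v \<in> e} = (\<Union>C\<in>Cs. {e \<in> C. v \<in> e})"
  proof
    show "{e \<in> E. v \<in> e} \<subseteq> (\<Union>C\<in>Cs. {e \<in> C. v \<in> e})"
    proof
      fix e assume e: "e \<in> {e \<in> E. v \<in> e}"
      then have "e \<notin> bridges V E" using nb by auto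
      then obtain C where "C \<in> cycles E" "e \<in> C" using nonbridge_cycle[OF assms(1)] e by blast
      then show "e \<in> (\<Union>C\<in>Cs. {e \<in> C. v \<in> e})" using e unfolding Cs_def by auto
    qed
  next
    show "(\<Union>C\<in>Cs. {e \<in> C. v \<in> e}) \<subseteq> {e \<in> E. v \<in> e}" using csub unfolding Cs_def by auto
  qed
  have fCs: "finite Cs" using fC unfolding Cs_def by simp
  have "card (\<Union>C\<in>Cs. {e \<in> C. v \<in> e}) = (\<Sum>C\<in>Cs. card {e \<in> C. v \<in> e})"
  proof (rule card_UN_disjoint[OF fCs])
    show "\<forall>C\<in>Cs. finite {e \<in> C. v \<in> e}" using csub fE unfolding Cs_def
      by (metis (no_types, lifting) finite_subset mem_Collect_eq subsetI)
    show "\<forall>C1\<in>Cs. \<forall>C2\<in>Cs. C1 \<noteq> C2 \<longrightarrow> {e \<in> C1. v \<in> e} \<inter> {e \<in> C2. v \<in> e} = {}"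
    proof (intro ballI impI)
      fix C1 C2 assume h: "C1 \<in> Cs" "C2 \<in> Cs" "C1 \<noteq> C2"
      show "{e \<in> C1. v \<in> e} \<inter> {e \<in> C2. v \<in> e} = {}"
      proof (rule ccontr)
        assume "{e \<in> C1. v \<in> e} \<inter> {e \<in> C2. v \<in> e} \<noteq> {}"
        then obtain e where "e \<in> C1" "e \<in> C2" by blast
        moreover have "C1 \<in> cycles E" "C2 \<in> cycles E" using h unfolding Cs_def by auto
        ultimately have "C1 = C2" using uniq csub by blast
        then show False using h by simp
      qed
    qed
  qed
  also have "\<dots> = (\<Sum>C\<in>Cs. 2)"
    by (rule sum.cong) (auto simp: Cs_def intro: cycle_vertex)
  finally have "degree E v = 2 * card Cs" unfolding degree_def using Ev by simp
  then show False using assms(3) by simp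
qed

lemma sum_incident:
  assumes "simple_graph V E" "B \<subseteq> E"
  shows "(\<Sum>v\<in>V. card {e \<in> B. v \<in> e}) = 2 * card B"
proof -
  have fV: "finite V" using assms(1) unfolding simple_graph_def by simp
  have fB: "finite B" using finite_E[OF assms(1)] assms(2) finite_subset by blast
  have "(\<Sum>v\<in>V. card {e \<in> B. v \<in> e}) = (\<Sum>v\<in>V. \<Sum>e\<in>B. if v \<in> e then 1 else 0)"
    using fB by (simp add: sum.inter_filter[symmetric])
  also have "\<dots> = (\<Sum>e\<in>B. \<Sum>v\<in>V. if v \<in> e then 1 else 0)" by (rule sum.swap)
  also have "\<dots> = (\<Sum>e\<in>B. card {v \<in> V. v \<in> e})"
    using fV by (simp add: sum.inter_filter[symmetric])
  also have "\<dots> = (\<Sum>e\<in>B. 2)"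
  proof (rule sum.cong)
    fix e assume "e \<in> B"
    then have "e \<subseteq> V" "card e = 2" using assms unfolding simple_graph_def by auto
    moreover have "{v \<in> V. v \<in> e} = e" using \<open>e \<subseteq> V\<close> by auto
    ultimately show "card {v \<in> V. v \<in> e} = 2" by simp
  qed simp
  finally show ?thesis by simp
qed

lemma walk_stays_hd: "is_walk E p \<Longrightarrow> hd p \<in> S \<Longrightarrow> (\<forall>s\<in>S. \<forall>f\<in>E. s \<in> f \<longrightarrow> f \<subseteq> S) \<Longrightarrow> last p \<in> S"
  using walk_stays walk_ne by (metis last_in_set subsetD)



lemma leaf_part:
  assumes "cactus V E" "card V > 2"
  shows "mu1 V E \<le> card (bridges V E)"
proof -
  have sg: "simple_graph V E" and con: "connected_graph V E" using assms(1) unfolding cactus_def by auto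
  have fV: "finite V" using sg unfolding simple_graph_def by simp
  have fE: "finite E" using finite_E[OF sg] .
  define L where "L = {v \<in> V. degree E v = 1}"
  define f where "f v = (THE e. e \<in> E \<and> v \<in> e)" for v
  have fprop: "{e \<in> E. v \<in> e} = {f v}" if "v \<in> L" for v
  proof -
    have "card {e \<in> E. v \<in> e} = 1" using that unfolding L_def degree_def by simp
    then obtain e where e: "{e \<in> E. v \<in> e} = {e}" by (auto simp: card_1_singleton_iff)
    then have P: "\<And>x. (x \<in> E \<and> v \<in> x) = (x = e)" by blast
    have "f v = e" unfolding f_def P by simp
    then show ?thesis using e by simp
  qed
  have fE': "f v \<in> E" "v \<in> f v" if "v \<in> L" for v using fprop[OF that] by auto
  have fb: "f v \<in> bridges V E" if vL: "v \<in> L" for v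
  proof -
    obtain w where w: "w \<noteq> v" "w \<in> V" "f v = {v,w}" using edge_two[OF sg fE'[OF vL]] by blast
    have vV: "v \<in> V" using vL unfolding L_def by simp
    have "\<not> connected_graph V (E - {f v})"
    proof
      assume "connected_graph V (E - {f v})"
      then obtain p where p: "is_walk (E - {f v}) p" "hd p = v" "last p = w"
        using vV w(2) unfolding connected_graph_def by blast
      have "\<forall>s\<in>{v}. \<forall>g\<in>E - {f v}. s \<in> g \<longrightarrow> g \<subseteq> {v}" using fprop[OF vL] by auto
      then have "last p \<in> {v}" using walk_stays_hd[OF p(1), of "{v}"] p(2) by simp
      then show False using p(3) w(1) by simp
    qed
    then show ?thesis unfolding bridges_def using fE'[OF vL] by simp
  qed
  have inj: "inj_on f L"
  proof
    fix v1 v2 assume h: "v1 \<in> L" "v2 \<in> L" "f v1 = f v2"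
    show "v1 = v2"
    proof (rule ccontr)
      assume ne: "v1 \<noteq> v2"
      obtain w where w: "w \<noteq> v1" "w \<in> V" "f v1 = {v1,w}" using edge_two[OF sg fE'[OF h(1)]] by blast
      have "v2 \<in> f v1" using h fE' by simp
      then have e: "f v1 = {v1, v2}" using w ne by auto
      have "\<not> V \<subseteq> {v1, v2}"
      proof
        assume "V \<subseteq> {v1,v2}"
        then have "card V \<le> card {v1,v2}" by (simp add: card_mono)
        also have "\<dots> = 2" using ne by simp
        finally show False using assms(2) by simp
      qed
      then obtain x where x: "x \<in> V" "x \<notin> {v1,v2}" by blast
      have v1V: "v1 \<in> V" using h unfolding L_def by simp
      obtain p where p: "is_walk E p" "hd p = v1" "last p = x"
        using con v1V x(1) unfolding connected_graph_def by blast
      have "\<forall>s\<in>{v1,v2}. \<forall>g\<in>E. s \<in> g \<longrightarrow> g \<subseteq> {v1,v2}"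
      proof (intro ballI impI)
        fix s g assume sg: "s \<in> {v1,v2}" "g \<in> E" "s \<in> g"
        have "g = f v1"
        proof (cases "s = v1")
          case True
          then have "g \<in> {g \<in> E. v1 \<in> g}" using sg by simp
          then show ?thesis using fprop[OF h(1)] by simp
        next
          case False
          then have "g \<in> {g \<in> E. v2 \<in> g}" using sg by simp
          then show ?thesis using fprop[OF h(2)] h(3) by simp
        qed
        then show "g \<subseteq> {v1,v2}" using e by simp
      qed
      then have "last p \<in> {v1,v2}" using walk_stays_hd[OF p(1), of "{v1,v2}"] p(2) by simp
      then show False using p(3) x(2) by simp
    qed
  qed
  have "finite (bridges V E)" using fE unfolding bridges_def by simp
  then have "card L \<le> card (bridges V E)"
    using card_inj_on_le[OF inj] fb by blast
  then show ?thesis unfolding mu1_def L_def by simp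
qed

lemma odd_part:
  assumes "cactus V E"
  shows "mu1 V E + mu_odd V E \<le> 2 * card (bridges V E)"
proof -
  have sg: "simple_graph V E" using assms(1) unfolding cactus_def by auto
  have fV: "finite V" using sg unfolding simple_graph_def by simp
  have fE: "finite E" using finite_E[OF sg] .
  define B where "B = bridges V E"
  define Od where "Od = {v \<in> V. odd (degree E v)}"
  have "mu1 V E + mu_odd V E = card ({v \<in> V. degree E v = 1} \<union> {v \<in> V. odd (degree E v) \<and> degree E v > 1})"
    unfolding mu1_def mu_odd_def by (rule card_Un_disjoint[symmetric]) (use fV in auto)
  also have "{v \<in> V. degree E v = 1} \<union> {v \<in> V. odd (degree E v) \<and> degree E v > 1} = Od"
  proof
    show "{v \<in> V. degree E v = 1} \<union> {v \<in> V. odd (degree E v) \<and> degree E v > 1} \<subseteq> Od"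
      unfolding Od_def by auto
  next
    show "Od \<subseteq> {v \<in> V. degree E v = 1} \<union> {v \<in> V. odd (degree E v) \<and> degree E v > 1}"
    proof
      fix v assume "v \<in> Od"
      then have "v \<in> V" "odd (degree E v)" unfolding Od_def by auto
      moreover have "degree E v \<noteq> 0" using \<open>odd (degree E v)\<close> by (metis even_zero)
      ultimately show "v \<in> {v \<in> V. degree E v = 1} \<union> {v \<in> V. odd (degree E v) \<and> degree E v > 1}"
        by (cases "degree E v = 1") auto
    qed
  qed
  also have "card Od = (\<Sum>v\<in>Od. 1)" by simp
  also have "\<dots> \<le> (\<Sum>v\<in>Od. card {e \<in> B. v \<in> e})"
  proof (rule sum_mono)
    fix v assume "v \<in> Od"
    then obtain e where "e \<in> B" "v \<in> e" using odd_has_bridge[OF assms] unfolding Od_def B_def by blast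
    moreover have "finite {e \<in> B. v \<in> e}" using fE unfolding B_def bridges_def by simp
    ultimately have "{e \<in> B. v \<in> e} \<noteq> {}" "finite {e \<in> B. v \<in> e}" by auto
    then show "1 \<le> card {e \<in> B. v \<in> e}" by (simp add: Suc_le_eq card_gt_0_iff)
  qed
  also have "\<dots> \<le> (\<Sum>v\<in>V. card {e \<in> B. v \<in> e})"
    by (rule sum_mono2[OF fV]) (simp_all add: Od_def)
  also have "\<dots> = 2 * card B" by (rule sum_incident[OF sg]) (auto simp: B_def bridges_def)
  finally show ?thesis unfolding B_def .
qed

theorem lemma4p4:
  fixes V :: "'a set" and E :: "'a set set"
  assumes "cactus V E" and "card V > 2"
  shows "real (card (bridges V E))
           \<ge> max (real (mu1 V E)) ((real (mu1 V E) + real (mu_odd V E)) / 2)"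
proof -
  have a: "mu1 V E \<le> card (bridges V E)" using leaf_part[OF assms] .
  have b: "mu1 V E + mu_odd V E \<le> 2 * card (bridges V E)" using odd_part[OF assms(1)] .
  have a': "real (mu1 V E) \<le> real (card (bridges V E))" using a by simp
  have b': "real (mu1 V E) + real (mu_odd V E) \<le> 2 * real (card (bridges V E))"
    using b by (metis of_nat_add of_nat_le_iff of_nat_mult of_nat_numeral)
  show ?thesis using a' b' by simp
qed

end
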